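(* Let $\gamma$ be a gauge on $\mathbb{R}^d$ with skewness $\sigma$ and let $v\in\mathrm{SD}_\gamma$. Let $C\subset\mathbb{R}^d$ be a finite set with positive weights $w_c$, $w_C=\sum_{c\in C}w_c$, and for $M>0$ define $h_M(x)=\sum_{c\in C}w_c\,\gamma(x-c+Mv)$. Let $U\subset\mathbb{R}^d$ be bounded and $\tau>0$. Then there exists $M_{U,\tau}>0$ such that for every $M>M_{U,\tau}$, every $u\in U$ and every $q\in\partial h_M(u)$ we have $\gamma^\circ(-q)>\sigma w_C-\tau$.
   Context: A gauge $\gamma$ on $\mathbb{R}^d$ is the Minkowski functional of a convex compact set $B_\gamma$ with the origin in its interior (not necessarily symmetric). The dual gauge is $\gamma^\circ(p)=\max\{\langle p,x\rangle:\gamma(x)=1\}$. $\partial$ denotes the convex subdifferential. The skewness is $\sigma=\sup_{x\neq0}\gamma(x)/\gamma(-x)$ and $\mathrm{SD}_\gamma=\{v:\gamma(v)=\sigma\gamma(-v)=1\}$. *)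

theory Defs
  imports "HOL-Analysis.Analysis"
begin

text \<open>Minkowski functional (gauge) of a set B: inf of t > 0 with x in t B.\<close>
definition minkowski_gauge :: "'a::euclidean_space set \<Rightarrow> 'a \<Rightarrow> real" where
  "minkowski_gauge B x = Inf {t. t > 0 \<and> x \<in> (\<lambda>y. t *\<^sub>R y) ` B}"

text \<open>Dual gauge: max of the pairing over the unit sphere of the gauge.\<close>
definition dual_gauge :: "('a::euclidean_space \<Rightarrow> real) \<Rightarrow> 'a \<Rightarrow> real" where
  "dual_gauge g p = Sup ((\<lambda>x. p \<bullet> x) ` {x. g x = 1})"

text \<open>Skewness of a gauge.\<close>
definition skewness :: "('a::euclidean_space \<Rightarrow> real) \<Rightarrow> real" where
  "skewness g = Sup ((\<lambda>x. g x / g (- x)) ` {x. x \<noteq> 0})"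

text \<open>Directions of maximal skewness.\<close>
definition SD :: "('a::euclidean_space \<Rightarrow> real) \<Rightarrow> 'a set" where
  "SD g = {v. g v = 1 \<and> skewness g * g (- v) = 1}"

text \<open>Convex subdifferential.\<close>
definition subdiff :: "('a::euclidean_space \<Rightarrow> real) \<Rightarrow> 'a \<Rightarrow> 'a set" where
  "subdiff f x = {q. \<forall>y. f y \<ge> f x + q \<bullet> (y - x)}"

end

theory Submission
  imports Defs
begin

context
  fixes B :: "'a::euclidean_space set"
  assumes cvx: "convex B" and cpt: "compact B" and int0: "0 \<in> interior B"
begin

lemma g_cball: obtains r where "r > 0" "cball 0 r \<subseteq> B"
  using int0 mem_interior_cball by blast

lemma g_bdd: "bdd_below {t. t > 0 \<and> x \<in> (\<lambda>y. t *\<^sub>R y) ` B}"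
  by (rule bdd_belowI[of _ 0]) auto

lemma g_mem:
  assumes "r > 0" "cball 0 r \<subseteq> B" "t > 0" "norm x \<le> t * r"
  shows "t \<in> {t. t > 0 \<and> x \<in> (\<lambda>y. t *\<^sub>R y) ` B}"
proof -
  have "norm ((1/t) *\<^sub>R x) \<le> r" using assms by (simp add: field_simps)
  hence "(1/t) *\<^sub>R x \<in> B" using assms(2) by auto
  moreover have "x = t *\<^sub>R ((1/t) *\<^sub>R x)" using assms by simp
  ultimately show ?thesis using assms by blast
qed

lemma g_nonempty: "{t. t > 0 \<and> x \<in> (\<lambda>y. t *\<^sub>R y) ` B} \<noteq> {}"
proof -
  obtain r where r: "r > 0" "cball 0 r \<subseteq> B" by (rule g_cball)
  have "norm x / r + 1 > 0" using r by (simp add: add_nonneg_pos)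
  moreover have "norm x \<le> (norm x / r + 1) * r" using r by (simp add: field_simps)
  ultimately show ?thesis using g_mem[OF r] by blast
qed

lemma g_nonneg: "minkowski_gauge B x \<ge> 0"
  unfolding minkowski_gauge_def by (rule cInf_greatest[OF g_nonempty]) auto

lemma g_le_norm: obtains r where "r > 0" "\<And>x. minkowski_gauge B x \<le> norm x / r"
proof -
  obtain r where r: "r > 0" "cball 0 r \<subseteq> B" by (rule g_cball)
  have "minkowski_gauge B x \<le> norm x / r" for x
  proof (rule field_le_epsilon)
    fix e :: real assume e: "e > 0"
    have "norm x / r + e > 0" using r e by (simp add: add_nonneg_pos)
    moreover have "norm x \<le> (norm x / r + e) * r" using r e by (simp add: field_simps)
    ultimately have "norm x / r + e \<in> {t. t > 0 \<and> x \<in> (\<lambda>y. t *\<^sub>R y) ` B}"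
      using g_mem[OF r] by blast
    thus "minkowski_gauge B x \<le> norm x / r + e"
      unfolding minkowski_gauge_def by (rule cInf_lower[OF _ g_bdd])
  qed
  thus ?thesis using that r by blast
qed

lemma g_up:
  assumes "t \<in> {t. t > 0 \<and> x \<in> (\<lambda>y. t *\<^sub>R y) ` B}" "t' \<ge> t"
  shows "t' \<in> {t. t > 0 \<and> x \<in> (\<lambda>y. t *\<^sub>R y) ` B}"
proof -
  obtain b where b: "b \<in> B" "x = t *\<^sub>R b" "t > 0" using assms by auto
  have t': "t' > 0" using assms b by simp
  have "0 \<in> B" using int0 interior_subset by blast
  hence "(t/t') *\<^sub>R b + (1 - t/t') *\<^sub>R 0 \<in> B"
    using convexD[OF cvx b(1) \<open>0 \<in> B\<close>, of "t/t'" "1 - t/t'"] assms b t' by simp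
  hence "(t/t') *\<^sub>R b \<in> B" by simp
  moreover have "x = t' *\<^sub>R ((t/t') *\<^sub>R b)" using b t' by simp
  ultimately show ?thesis using t' by blast
qed

lemma g_lt:
  assumes "minkowski_gauge B x < t"
  shows "t \<in> {t. t > 0 \<and> x \<in> (\<lambda>y. t *\<^sub>R y) ` B}"
proof -
  obtain s where "s \<in> {t. t > 0 \<and> x \<in> (\<lambda>y. t *\<^sub>R y) ` B}" "s < t"
    using cInf_lessD[OF g_nonempty] assms unfolding minkowski_gauge_def by blast
  thus ?thesis using g_up by auto
qed

lemma g_lower: "t \<in> {t. t > 0 \<and> x \<in> (\<lambda>y. t *\<^sub>R y) ` B} \<Longrightarrow> minkowski_gauge B x \<le> t"
  unfolding minkowski_gauge_def by (rule cInf_lower[OF _ g_bdd])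

lemma g_homog_le:
  assumes "s > 0" shows "minkowski_gauge B (s *\<^sub>R x) \<le> s * minkowski_gauge B x"
proof -
  have "minkowski_gauge B (s *\<^sub>R x) / s \<le> minkowski_gauge B x"
  proof (rule field_le_epsilon)
    fix e :: real assume e: "e > 0"
    have "minkowski_gauge B x + e \<in> {t. t > 0 \<and> x \<in> (\<lambda>y. t *\<^sub>R y) ` B}"
      by (rule g_lt) (use e in simp)
    then obtain b where b: "b \<in> B" "x = (minkowski_gauge B x + e) *\<^sub>R b"
      "minkowski_gauge B x + e > 0" by auto
    have "s *\<^sub>R x = (s * (minkowski_gauge B x + e)) *\<^sub>R b" using b(2) by (metis scaleR_scaleR)
    hence "s * (minkowski_gauge B x + e) \<in> {t. t > 0 \<and> s *\<^sub>R x \<in> (\<lambda>y. t *\<^sub>R y) ` B}"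
      using b assms by auto
    hence "minkowski_gauge B (s *\<^sub>R x) \<le> s * (minkowski_gauge B x + e)" by (rule g_lower)
    thus "minkowski_gauge B (s *\<^sub>R x) / s \<le> minkowski_gauge B x + e"
      using assms by (simp add: field_simps)
  qed
  thus ?thesis using assms by (simp add: field_simps)
qed

lemma g_homog:
  assumes "s > 0" shows "minkowski_gauge B (s *\<^sub>R x) = s * minkowski_gauge B x"
proof -
  have "minkowski_gauge B x = minkowski_gauge B ((1/s) *\<^sub>R (s *\<^sub>R x))" using assms by simp
  also have "\<dots> \<le> (1/s) * minkowski_gauge B (s *\<^sub>R x)" using assms by (intro g_homog_le) simp
  finally have "s * minkowski_gauge B x \<le> minkowski_gauge B (s *\<^sub>R x)"
    using assms by (simp add: field_simps)
  thus ?thesis using g_homog_le[OF assms, of x] by linarith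
qed

lemma g_sub: "minkowski_gauge B (x + y) \<le> minkowski_gauge B x + minkowski_gauge B y"
proof (rule field_le_epsilon)
  fix e :: real assume e: "e > 0"
  define a where "a = minkowski_gauge B x + e/2"
  define c where "c = minkowski_gauge B y + e/2"
  have "a \<in> {t. t > 0 \<and> x \<in> (\<lambda>y. t *\<^sub>R y) ` B}" unfolding a_def by (rule g_lt) (use e in simp)
  then obtain b1 where b1: "b1 \<in> B" "x = a *\<^sub>R b1" "a > 0" by auto
  have "c \<in> {t. t > 0 \<and> y \<in> (\<lambda>y. t *\<^sub>R y) ` B}" unfolding c_def by (rule g_lt) (use e in simp)
  then obtain b2 where b2: "b2 \<in> B" "y = c *\<^sub>R b2" "c > 0" by auto
  have "(a/(a+c)) *\<^sub>R b1 + (c/(a+c)) *\<^sub>R b2 \<in> B"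
    using convexD[OF cvx b1(1) b2(1)] b1 b2 by (simp add: field_simps add_divide_distrib[symmetric])
  moreover have "x + y = (a+c) *\<^sub>R ((a/(a+c)) *\<^sub>R b1 + (c/(a+c)) *\<^sub>R b2)"
    using b1 b2 by (simp add: scaleR_add_right)
  ultimately have "a + c \<in> {t. t > 0 \<and> x + y \<in> (\<lambda>y. t *\<^sub>R y) ` B}" using b1 b2 by force
  hence "minkowski_gauge B (x+y) \<le> a + c" by (rule g_lower)
  thus "minkowski_gauge B (x + y) \<le> minkowski_gauge B x + minkowski_gauge B y + e"
    using a_def c_def by simp
qed

lemma g_norm_bound: obtains R where "\<And>x. minkowski_gauge B x = 1 \<Longrightarrow> norm x \<le> R"
proof -
  obtain R where R: "R > 0" "\<forall>x\<in>B. norm x \<le> R" using compact_imp_bounded[OF cpt] bounded_pos by blast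
  have "norm x \<le> R" if "minkowski_gauge B x = 1" for x
  proof (rule field_le_epsilon)
    fix e :: real assume e: "e > 0"
    have "1 + e/R \<in> {t. t > 0 \<and> x \<in> (\<lambda>y. t *\<^sub>R y) ` B}" by (rule g_lt) (use e R that in simp)
    then obtain b where b: "b \<in> B" "x = (1 + e/R) *\<^sub>R b" "1 + e/R > 0" by auto
    have "norm x = (1 + e/R) * norm b" using b by simp
    also have "\<dots> \<le> (1 + e/R) * R" using b R by (intro mult_left_mono) auto
    also have "\<dots> = R + e" using R by (simp add: field_simps)
    finally show "norm x \<le> R + e" .
  qed
  thus ?thesis using that by blast
qed

end


theorem mainTheorem3:
  fixes B :: "'a::euclidean_space set" and C :: "'a set" and w :: "'a \<Rightarrow> real"
    and v :: 'a and U :: "'a set" and \<tau> :: real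
  assumes "convex B" and "compact B" and "0 \<in> interior B"
    and "v \<in> SD (minkowski_gauge B)"
    and "finite C" and "\<forall>c\<in>C. w c > 0"
    and "bounded U" and "\<tau> > 0"
  shows "\<exists>M0>0. \<forall>M>M0. \<forall>u\<in>U.
           \<forall>q\<in>subdiff (\<lambda>x. \<Sum>c\<in>C. w c * minkowski_gauge B (x - c + M *\<^sub>R v)) u.
             dual_gauge (minkowski_gauge B) (- q)
               > skewness (minkowski_gauge B) * (\<Sum>c\<in>C. w c) - \<tau>"
proof -
  note A = assms(1,2,3)
  define g where "g = minkowski_gauge B"
  define \<sigma> where "\<sigma> = skewness g"
  have gv: "g v = 1" and sv: "\<sigma> * g (- v) = 1" using assms(4) unfolding SD_def g_def \<sigma>_def by auto
  have "g (- v) \<ge> 0" unfolding g_def by (rule g_nonneg[OF A])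
  have \<sigma>pos: "\<sigma> > 0"
  proof (rule ccontr)
    assume "\<not> \<sigma> > 0"
    hence "\<sigma> * g (- v) \<le> 0" using \<open>g (- v) \<ge> 0\<close> by (simp add: mult_nonpos_nonneg)
    thus False using sv by simp
  qed
  obtain r where r: "r > 0" "\<And>x. g x \<le> norm x / r" unfolding g_def using g_le_norm[OF A] by blast
  obtain Ru where Ru: "Ru > 0" "\<forall>u\<in>U. norm u \<le> Ru" using assms(7) bounded_pos by blast
  obtain R where R: "\<And>x. g x = 1 \<Longrightarrow> norm x \<le> R" unfolding g_def using g_norm_bound[OF A] by blast
  have gsub: "g (x + y) \<le> g x + g y" for x y unfolding g_def by (rule g_sub[OF A])
  have ghom: "s > 0 \<Longrightarrow> g (s *\<^sub>R x) = s * g x" for s x unfolding g_def by (rule g_homog[OF A])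
  define K where "K = (\<Sum>c\<in>C. w c * (2 * (Ru + norm c) / r))"
  have K0: "K \<ge> 0" unfolding K_def using assms(6) Ru r
    by (intro sum_nonneg mult_nonneg_nonneg divide_nonneg_pos) (auto intro: add_nonneg_nonneg less_imp_le)
  define M0 where "M0 = \<sigma> * K / \<tau> + 1"
  have M00: "M0 > 0" unfolding M0_def using K0 \<sigma>pos assms(8) by (simp add: add_nonneg_pos)
  have main: "\<sigma> * (\<Sum>c\<in>C. w c) - \<tau> < dual_gauge g (- q)"
    if M: "M > M0" and u: "u \<in> U"
      and q: "q \<in> subdiff (\<lambda>x. \<Sum>c\<in>C. w c * g (x - c + M *\<^sub>R v)) u" for M u q
  proof -
    have Mpos: "M > 0" using M M00 by simp
    have "(\<Sum>c\<in>C. w c * g ((u - M *\<^sub>R v) - c + M *\<^sub>R v)) \<ge>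
          (\<Sum>c\<in>C. w c * g (u - c + M *\<^sub>R v)) + q \<bullet> ((u - M *\<^sub>R v) - u)"
      using q unfolding subdiff_def by blast
    hence h1: "(\<Sum>c\<in>C. w c * g (u - c)) \<ge> (\<Sum>c\<in>C. w c * g (u - c + M *\<^sub>R v)) - M * (q \<bullet> v)"
      by (simp add: inner_diff_right)
    have trm: "w c * g (u - c + M *\<^sub>R v) - w c * g (u - c) \<ge> w c * M - w c * (2 * (Ru + norm c) / r)"
      if c: "c \<in> C" for c
    proof -
      have "M = g (M *\<^sub>R v)" using ghom[OF Mpos] gv by simp
      also have "M *\<^sub>R v = (u - c + M *\<^sub>R v) + (c - u)" by simp
      finally have "M \<le> g (u - c + M *\<^sub>R v) + g (c - u)" using gsub by metis
      moreover have "g (c - u) \<le> norm (c - u) / r" "g (u - c) \<le> norm (u - c) / r" using r by auto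
      moreover have "norm (c - u) \<le> norm c + Ru" "norm (u - c) \<le> norm c + Ru"
        using Ru u norm_triangle_ineq4[of c u] norm_triangle_ineq4[of u c] by auto
      moreover have "norm (c - u) / r \<le> (norm c + Ru) / r" "norm (u - c) / r \<le> (norm c + Ru) / r"
        using calculation(4,5) r(1) by (auto intro: divide_right_mono)
      moreover have "2 * (Ru + norm c) / r = (norm c + Ru) / r + (norm c + Ru) / r" by (simp add: field_simps)
      ultimately have "g (u - c + M *\<^sub>R v) - g (u - c) \<ge> M - 2 * (Ru + norm c) / r"
        by linarith
      hence "w c * (g (u - c + M *\<^sub>R v) - g (u - c)) \<ge> w c * (M - 2 * (Ru + norm c) / r)"
        using assms(6) c by (intro mult_left_mono) auto
      thus ?thesis by (simp add: algebra_simps)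
    qed
    have "M * (\<Sum>c\<in>C. w c) - K = (\<Sum>c\<in>C. w c * M - w c * (2 * (Ru + norm c) / r))"
      unfolding K_def by (simp add: sum_subtractf sum_distrib_left algebra_simps)
    also have "\<dots> \<le> (\<Sum>c\<in>C. w c * g (u - c + M *\<^sub>R v) - w c * g (u - c))"
      by (rule sum_mono) (rule trm)
    also have "\<dots> = (\<Sum>c\<in>C. w c * g (u - c + M *\<^sub>R v)) - (\<Sum>c\<in>C. w c * g (u - c))"
      by (simp add: sum_subtractf)
    also have "\<dots> \<le> M * (q \<bullet> v)" using h1 by simp
    finally have h2: "M * (\<Sum>c\<in>C. w c) - K \<le> M * (q \<bullet> v)" .
    have gsv: "g (- (\<sigma> *\<^sub>R v)) = 1" using ghom[OF \<sigma>pos, of "- v"] sv by simp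
    have bdd: "bdd_above ((\<lambda>x. (- q) \<bullet> x) ` {x. g x = 1})"
    proof (rule bdd_aboveI2)
      fix x assume "x \<in> {x. g x = 1}"
      hence "norm x \<le> R" using R by simp
      hence "norm q * norm x \<le> norm q * R" by (simp add: mult_left_mono)
      thus "(- q) \<bullet> x \<le> norm q * R" using norm_cauchy_schwarz[of "- q" x] by simp
    qed
    have "(- q) \<bullet> (- (\<sigma> *\<^sub>R v)) \<le> dual_gauge g (- q)"
      unfolding dual_gauge_def by (rule cSup_upper[OF imageI bdd]) (use gsv in simp)
    hence d: "\<sigma> * (q \<bullet> v) \<le> dual_gauge g (- q)" by simp
    have "\<sigma> * K / \<tau> < M" using M unfolding M0_def by simp
    hence "\<sigma> * K < \<tau> * M" using assms(8) by (simp add: pos_divide_less_eq mult.commute)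
    hence "\<sigma> * K / M < \<tau>" using Mpos by (simp add: divide_less_eq mult.commute)
    moreover have "\<sigma> * (\<Sum>c\<in>C. w c) - \<sigma> * K / M \<le> \<sigma> * (q \<bullet> v)"
    proof -
      have "(\<Sum>c\<in>C. w c) - K / M \<le> q \<bullet> v" using h2 Mpos by (simp add: field_simps)
      hence "\<sigma> * ((\<Sum>c\<in>C. w c) - K / M) \<le> \<sigma> * (q \<bullet> v)" using \<sigma>pos by (simp add: mult_left_mono)
      thus ?thesis by (simp add: algebra_simps)
    qed
    ultimately show ?thesis using d by linarith
  qed
  show ?thesis unfolding g_def[symmetric] \<sigma>_def[symmetric] using M00 main by blast
qed

end
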